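(* Let $R$ be a commutative ring endowed with a translation-invariant partial order $\le$ on its additive group, and assume that $R$ is strongly localizable. Then $R$ is localizable.
   Context: Rings are commutative with unit $1$. Translation-invariant means $r\le s$ implies $r+t\le s+t$; $R^+=\{r:0\le r\}$. $\mathrm{Loc}(R)$ is the set of $s\in 1+R^+=\{1+t:t\in R^+\}$ such that for all $r\in R$, $rs\in R^+$ implies $r\in R^+$. $R$ is localizable if for every $r\in R$ there exists $s\in\mathrm{Loc}(R)$ with $-s\le r\le s$. $R$ is strongly localizable if $r^2\in R^+$ for all $r\in R$ and $\mathrm{Loc}(R)=1+R^+$. *)

theory Defs
  imports Main
begin

text \<open>A commutative ring with unit carrying a translation-invariant partial order on its
additive group: sort {comm_ring_1, ordered_ab_group_add}. No compatibility with
multiplication is assumed.\<close>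

definition pos_cone :: "'a::{comm_ring_1, ordered_ab_group_add} set" where
  "pos_cone = {r. 0 \<le> r}"

definition Loc :: "'a::{comm_ring_1, ordered_ab_group_add} set" where
  "Loc = {s. (\<exists>t\<in>pos_cone. s = 1 + t) \<and> (\<forall>r. r * s \<in> pos_cone \<longrightarrow> r \<in> pos_cone)}"

definition localizable :: "'a::{comm_ring_1, ordered_ab_group_add} itself \<Rightarrow> bool" where
  "localizable _ \<longleftrightarrow> (\<forall>r::'a. \<exists>s\<in>Loc. - s \<le> r \<and> r \<le> s)"

definition strongly_localizable :: "'a::{comm_ring_1, ordered_ab_group_add} itself \<Rightarrow> bool" where
  "strongly_localizable _ \<longleftrightarrow>
     (\<forall>r::'a. r * r \<in> pos_cone) \<and> Loc = {s::'a. \<exists>t\<in>pos_cone. s = 1 + t}"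

end

theory Submission
  imports Defs
begin

theorem proposition2:
  assumes "strongly_localizable TYPE('a::{comm_ring_1, ordered_ab_group_add})"
  shows "localizable TYPE('a)"
proof -
  have sq: "\<And>x::'a. 0 \<le> x * x" and L: "Loc = {s::'a. \<exists>t\<in>pos_cone. s = 1 + t}"
    using assms unfolding strongly_localizable_def pos_cone_def by auto
  have one: "(0::'a) \<le> 1" using sq[of 1] by simp
  have two: "(1 + 1 :: 'a) \<in> Loc" unfolding L pos_cone_def using one by blast
  hence div2: "\<And>x::'a. 0 \<le> x * (1 + 1) \<Longrightarrow> 0 \<le> x"
    unfolding Loc_def pos_cone_def by auto
  show ?thesis unfolding localizable_def
  proof
    fix r :: 'a
    define s where "s = 1 + r * r"
    have sL: "s \<in> Loc" using L sq unfolding s_def pos_cone_def by auto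
    have e1: "(s + r) * (1 + 1) = (r + 1) * (r + 1) + (r * r + 1)"
      unfolding s_def by (simp add: algebra_simps)
    have e2: "(s - r) * (1 + 1) = (r - 1) * (r - 1) + (r * r + 1)"
      unfolding s_def by (simp add: algebra_simps)
    have "0 \<le> (s + r) * (1 + 1)" unfolding e1
      by (intro add_nonneg_nonneg sq one)
    hence a: "0 \<le> s + r" by (rule div2)
    have "0 \<le> (s - r) * (1 + 1)" unfolding e2
      by (intro add_nonneg_nonneg sq one)
    hence b: "0 \<le> s - r" by (rule div2)
    have "- s \<le> r" using a by (metis add.commute le_add_diff_inverse2 add_le_cancel_right diff_minus_eq_add minus_diff_eq diff_le_eq diff_0 add_0 neg_le_iff_le)
    moreover have "r \<le> s" using b by (simp add: le_diff_eq)
    ultimately show "\<exists>s\<in>Loc. - s \<le> r \<and> r \<le> s" using sL by blast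
  qed
qed

end
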